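(* Let $0<q<1$, $n\ge 1$, and let $a_j,b_j$ ($1\le j\le n$) be non-negative integers. Then \[ \zeta\big[a_1+2,\{1\}^{b_1},\dots,a_n+2,\{1\}^{b_n}\big] = \zeta\big[b_n+2,\{1\}^{a_n},\,b_{n-1}+2,\{1\}^{a_{n-1}},\dots,b_1+2,\{1\}^{a_1}\big]. \]
   Context: Fix $0<q<1$. For real $x$, $[x]_q := (1-q^x)/(1-q)$. For positive integers $s_1,\dots,s_N$ with $s_1>1$, $\zeta[s_1,\dots,s_N] := \sum_{k_1>\cdots>k_N>0}\prod_{j=1}^N q^{(s_j-1)k_j}/[k_j]_q^{s_j}$ (sum over positive integers). $\{1\}^b$ denotes $b$ consecutive copies of $1$ in an argument list (empty if $b=0$). *)

theory Defs
  imports "HOL-Analysis.Analysis"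
begin

definition qint :: "real \<Rightarrow> real \<Rightarrow> real" where
  "qint q x = (1 - q powr x) / (1 - q)"

definition qmzv_index :: "nat \<Rightarrow> nat list set" where
  "qmzv_index N = {ks. length ks = N \<and> sorted_wrt (>) ks \<and> (\<forall>k\<in>set ks. k > 0)}"

definition qmzv :: "real \<Rightarrow> nat list \<Rightarrow> real" where
  "qmzv q s = (\<Sum>\<^sub>\<infinity>ks\<in>qmzv_index (length s).
      \<Prod>j<length s. q ^ ((s!j - 1) * ks!j) / (qint q (real (ks!j))) ^ (s!j))"

end

theory Submission
  imports Defs
begin


definition qn :: "real \<Rightarrow> nat \<Rightarrow> real" where
  "qn q k = (1 - q ^ k) / (1 - q)"

definition qf :: "real \<Rightarrow> nat \<Rightarrow> real" where
  "qf q k = (\<Prod>i\<in>{1..k}. qn q i)"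

definition cc :: "real \<Rightarrow> nat \<Rightarrow> nat \<Rightarrow> real" where
  "cc q m n = q ^ (m * n) * qf q m * qf q n / qf q (m + n)"

lemma qn_0[simp]: "qn q 0 = 0" by (simp add: qn_def)

lemma qn_ge1: "0 < q \<Longrightarrow> q < 1 \<Longrightarrow> k \<ge> 1 \<Longrightarrow> qn q k \<ge> 1"
proof -
  assume a: "0 < q" "q < 1" "k \<ge> 1"
  have "q ^ k \<le> q ^ 1" using a by (intro power_decreasing) auto
  then show ?thesis using a by (simp add: qn_def field_simps)
qed

lemma qn_nonneg: "0 < q \<Longrightarrow> q < 1 \<Longrightarrow> qn q k \<ge> 0"
  by (cases "k = 0") (auto intro: order_trans[OF _ qn_ge1])

lemma qn_pos: "0 < q \<Longrightarrow> q < 1 \<Longrightarrow> k \<ge> 1 \<Longrightarrow> qn q k > 0"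
  using qn_ge1[of q k] by linarith

lemma qn_add: "q < 1 \<Longrightarrow> qn q (m + k) = qn q m + q ^ m * qn q k"
  by (simp add: qn_def power_add field_simps)

lemma qf_Suc: "qf q (Suc k) = qf q k * qn q (Suc k)"
  by (simp add: qf_def)

lemma qf_0[simp]: "qf q 0 = 1" by (simp add: qf_def)

lemma qf_pos: "0 < q \<Longrightarrow> q < 1 \<Longrightarrow> qf q k > 0"
  by (induction k) (auto simp: qf_Suc qn_pos)

lemma qf_mono: "0 < q \<Longrightarrow> q < 1 \<Longrightarrow> qf q k \<le> qf q (j + k)"
proof (induction j)
  case 0 then show ?case by simp
next
  case (Suc j)
  have "qf q (j + k) \<le> qf q (j + k) * qn q (Suc (j + k))"
    using qn_ge1[of q "Suc (j+k)"] qf_pos[of q "j+k"] Suc.prems by simp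
  then show ?case using Suc by (simp add: qf_Suc)
qed

lemma cc_sym: "cc q m n = cc q n m"
  by (simp add: cc_def mult_ac add.commute)

lemma cc_0: "0 < q \<Longrightarrow> q < 1 \<Longrightarrow> cc q m 0 = 1" "0 < q \<Longrightarrow> q < 1 \<Longrightarrow> cc q 0 n = 1"
  using qf_pos[of q m] qf_pos[of q n] by (simp_all add: cc_def)

lemma cc_nonneg: "0 < q \<Longrightarrow> q < 1 \<Longrightarrow> cc q m n \<ge> 0"
  using qf_pos[of q] unfolding cc_def
  by (intro divide_nonneg_nonneg mult_nonneg_nonneg) (auto intro: less_imp_le)

lemma cc_rec_aux:
  fixes A B D F Fm Fj P Q :: real
  assumes "A > 0" "B > 0" "D > 0" "F > 0" "Fm > 0" "Fj > 0" "D = A + Q * B"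
  shows "P * Q * Fm * (Fj * B) / (F * D) / B = Q / A * (P * Fm * Fj / F - P * Q * Fm * (Fj * B) / (F * D))"
proof -
  have "P * Fm * Fj / F - P * Q * Fm * (Fj * B) / (F * D) = P * Fm * Fj * (D - Q * B) / (F * D)"
    using assms(1-6) by (simp add: field_simps)
  also have "\<dots> = P * Fm * Fj * A / (F * D)" using assms by simp
  finally show ?thesis using assms(1-6) by (simp add: field_simps)
qed

lemma cc_rec:
  assumes q: "0 < q" "q < 1" and m: "m \<ge> 1"
  shows "cc q m (Suc j) / qn q (Suc j) = q ^ m / qn q m * (cc q m j - cc q m (Suc j))"
proof -
  have p1: "qn q m > 0" using qn_pos[OF q m] .
  have p2: "qn q (Suc j) > 0" using qn_pos[OF q] by simp
  have p3: "qn q (Suc (m + j)) > 0" using qn_pos[OF q] by simp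
  have p4: "qf q (m + j) > 0" "qf q m > 0" "qf q j > 0" using qf_pos[OF q] by auto
  have e1: "qf q (m + Suc j) = qf q (m + j) * qn q (Suc (m + j))" by (simp add: qf_Suc)
  have e2: "qn q (Suc (m + j)) = qn q m + q ^ m * qn q (Suc j)"
    using qn_add[of q m "Suc j"] q by simp
  have e3: "qf q (Suc j) = qf q j * qn q (Suc j)" by (simp add: qf_Suc)
  have e4: "q ^ (m * Suc j) = q ^ (m * j) * q ^ m" by (simp add: power_add)
  show ?thesis
    unfolding cc_def e1 e3 e4
    using cc_rec_aux[OF p1 p2 p3 p4(1) p4(2) p4(3) e2, of "q ^ (m * j)"]
    by (simp add: mult_ac)
qed

lemma cc_lim:
  assumes q: "0 < q" "q < 1" and m: "m \<ge> 1"
  shows "(\<lambda>N. cc q m N) \<longlonglongrightarrow> 0"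
proof (rule tendsto_sandwich[of "\<lambda>_. 0" _ _ "\<lambda>N. qf q m * (q ^ m) ^ N"])
  show "\<forall>\<^sub>F N in sequentially. 0 \<le> cc q m N" using cc_nonneg[OF q] by simp
  show "\<forall>\<^sub>F N in sequentially. cc q m N \<le> qf q m * (q ^ m) ^ N"
  proof (intro always_eventually allI)
    fix N
    have "qf q N / qf q (m + N) \<le> 1"
      using qf_mono[OF q, of N m] qf_pos[OF q] by simp
    then have "q ^ (m * N) * qf q m * (qf q N / qf q (m + N)) \<le> q ^ (m * N) * qf q m * 1"
      using qf_pos[OF q, of m] q by (intro mult_left_mono) auto
    moreover have "cc q m N = q ^ (m * N) * qf q m * (qf q N / qf q (m + N))"
      by (simp add: cc_def)
    moreover have "(q ^ m) ^ N = q ^ (m * N)"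
      by (simp add: power_mult)
    ultimately show "cc q m N \<le> qf q m * (q ^ m) ^ N"
      by (simp add: mult_ac)
  qed
  have "q ^ m < 1" using q m by (simp add: power_less_one_iff)
  then have "(\<lambda>N. (q ^ m) ^ N) \<longlonglongrightarrow> 0" using q by (intro LIMSEQ_power_zero) simp
  then show "(\<lambda>N. qf q m * (q ^ m) ^ N) \<longlonglongrightarrow> 0"
    using tendsto_mult_right_zero by blast
qed simp


lemma cc_tele:
  assumes q: "0 < q" "q < 1" and m: "m \<ge> 1"
  shows "(\<integral>\<^sup>+n. ennreal (cc q m n / qn q n) * indicator {n'<..} n \<partial>count_space UNIV)
       = ennreal (q ^ m / qn q m * cc q m n')"
proof -
  define h where "h n = (if n' < n then cc q m n / qn q n else 0)" for n
  define L where "L = q ^ m / qn q m * cc q m n'"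
  have hnn: "h n \<ge> 0" for n
    using cc_nonneg[OF q] qn_nonneg[OF q] by (simp add: h_def)
  have Lnn: "L \<ge> 0"
    using cc_nonneg[OF q] qn_nonneg[OF q] q by (simp add: L_def)
  have int: "ennreal (cc q m n / qn q n) * indicator {n'<..} n = ennreal (h n)" for n
    by (simp add: h_def indicator_def)
  have lim: "(\<lambda>i. cc q m (i + n')) \<longlonglongrightarrow> 0"
    using LIMSEQ_ignore_initial_segment[OF cc_lim[OF q m]] by simp
  have "(\<lambda>i. cc q m (i + n') - cc q m (Suc i + n')) sums (cc q m (0 + n') - 0)"
    using telescope_sums'[OF lim] by simp
  then have "(\<lambda>i. q ^ m / qn q m * (cc q m (i + n') - cc q m (Suc i + n'))) sums L"
    unfolding L_def by (intro sums_mult) simp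
  moreover have "h (i + Suc n') = q ^ m / qn q m * (cc q m (i + n') - cc q m (Suc i + n'))" for i
    using cc_rec[OF q m, of "i + n'"] by (simp add: h_def)
  ultimately have "(\<lambda>i. h (i + Suc n')) sums L" by simp
  then have "h sums (L + sum h {..<Suc n'})" by (rule sums_iff_shift[THEN iffD1])
  moreover have "sum h {..<Suc n'} = 0" by (intro sum.neutral) (auto simp: h_def)
  ultimately have "h sums L" by simp
  then have "(\<lambda>i. ennreal (h i)) sums ennreal L" using hnn Lnn by simp
  then have "(\<Sum>i. ennreal (h i)) = ennreal L" by (rule sums_unique[symmetric])
  then show ?thesis
    by (simp add: int nn_integral_count_space_nat L_def)
qed

lemma nn_swap:
  fixes f :: "'a::countable \<Rightarrow> 'b::countable \<Rightarrow> ennreal"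
  shows "(\<integral>\<^sup>+x. \<integral>\<^sup>+y. f x y \<partial>count_space UNIV \<partial>count_space UNIV)
       = (\<integral>\<^sup>+y. \<integral>\<^sup>+x. f x y \<partial>count_space UNIV \<partial>count_space UNIV)"
  by (rule nn_integral_count_space_nn_integral) auto

lemma nn_point:
  "(\<integral>\<^sup>+x. c * indicator {a} x \<partial>count_space UNIV) = (c :: ennreal)"
  by (simp add: nn_integral_cmult_indicator emeasure_count_space_finite)

lemma nn_finsum:
  fixes n :: nat
  shows "(\<Sum>i<n. f i) = (\<integral>\<^sup>+i. f i * indicator {..<n} i \<partial>count_space UNIV)"
proof -
  have "(\<integral>\<^sup>+i. f i * indicator {..<n} i \<partial>count_space UNIV) = (\<integral>\<^sup>+i. f i \<partial>count_space {..<n})"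
    by (rule nn_integral_count_space_indicator[symmetric]) simp
  also have "\<dots> = sum f {..<n}" by (rule nn_integral_count_space_finite) simp
  finally show ?thesis by simp
qed

datatype letter = LA | LB

fun sw :: "letter \<Rightarrow> letter" where
  "sw LA = LB" | "sw LB = LA"

fun val :: "real \<Rightarrow> letter list \<Rightarrow> nat \<Rightarrow> ennreal" where
  "val q [] m = (if m = 0 then 1 else 0)"
| "val q (LA # w) m = ennreal (q ^ m / qn q m) * val q w m"
| "val q (LB # w) m = ennreal (1 / qn q m) * (\<Sum>m'<m. val q w m')"

definition Z :: "real \<Rightarrow> letter list \<Rightarrow> letter list \<Rightarrow> ennreal" where
  "Z q u v = (\<integral>\<^sup>+m. \<integral>\<^sup>+n. val q u m * ennreal (cc q m n) * val q v n
      \<partial>count_space UNIV \<partial>count_space UNIV)"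

definition zw :: "real \<Rightarrow> letter list \<Rightarrow> ennreal" where
  "zw q w = (\<integral>\<^sup>+m. val q w m \<partial>count_space UNIV)"

lemma val_0: "w \<noteq> [] \<Longrightarrow> val q w 0 = 0"
  by (cases w rule: list.exhaust; cases "hd w") auto

lemma Z_nil_right:
  assumes q: "0 < q" "q < 1"
  shows "Z q u [] = zw q u"
proof -
  have "val q u m * ennreal (cc q m n) * val q [] n = val q u m * indicator {0} n" for m n
    using cc_0[OF q] by (auto simp: indicator_def)
  then show ?thesis unfolding Z_def zw_def by (simp add: nn_point)
qed

lemma Z_sym: "Z q u v = Z q v u"
  unfolding Z_def
  by (subst nn_swap) (simp add: cc_sym mult_ac)

lemma Z_nil_left:
  assumes q: "0 < q" "q < 1"
  shows "Z q [] v = zw q v"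
  using Z_nil_right[OF q] Z_sym by metis

lemma transA:
  assumes q: "0 < q" "q < 1" and u0: "val q u 0 = 0"
  shows "Z q (LA # u) v = Z q u (LB # v)"
  unfolding Z_def
proof (rule nn_integral_cong)
  fix m :: nat
  show "(\<integral>\<^sup>+n. val q (LA # u) m * ennreal (cc q m n) * val q v n \<partial>count_space UNIV)
      = (\<integral>\<^sup>+n. val q u m * ennreal (cc q m n) * val q (LB # v) n \<partial>count_space UNIV)"
  proof (cases "m = 0")
    case True
    then show ?thesis using u0 by simp
  next
    case False
    then have m: "m \<ge> 1" by simp
    let ?U = "val q u m"
    have "(\<integral>\<^sup>+n. ?U * ennreal (cc q m n) * val q (LB # v) n \<partial>count_space UNIV)
       = (\<integral>\<^sup>+n. \<integral>\<^sup>+n'. ?U * val q v n' * (ennreal (cc q m n / qn q n) * indicator {n'<..} n)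
            \<partial>count_space UNIV \<partial>count_space UNIV)"
    proof (intro nn_integral_cong)
      fix n :: nat
      have e: "ennreal (cc q m n) * ennreal (1 / qn q n) = ennreal (cc q m n / qn q n)"
        using cc_nonneg[OF q] qn_nonneg[OF q] by (simp add: ennreal_mult''[symmetric])
      have "?U * ennreal (cc q m n) * val q (LB # v) n
          = (?U * ennreal (cc q m n) * ennreal (1 / qn q n)) *
            (\<integral>\<^sup>+n'. val q v n' * indicator {..<n} n' \<partial>count_space UNIV)"
        by (simp add: nn_finsum mult_ac)
      also have "\<dots> = (\<integral>\<^sup>+n'. (?U * ennreal (cc q m n) * ennreal (1 / qn q n)) *
            (val q v n' * indicator {..<n} n') \<partial>count_space UNIV)"
        by (rule nn_integral_cmult[symmetric]) simp
      also have "\<dots> = (\<integral>\<^sup>+n'. ?U * val q v n' * (ennreal (cc q m n / qn q n) * indicator {n'<..} n)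
            \<partial>count_space UNIV)"
        by (intro nn_integral_cong) (simp add: e[symmetric] indicator_def mult_ac)
      finally show "?U * ennreal (cc q m n) * val q (LB # v) n = \<dots>" .
    qed
    also have "\<dots> = (\<integral>\<^sup>+n'. \<integral>\<^sup>+n. ?U * val q v n' * (ennreal (cc q m n / qn q n) * indicator {n'<..} n)
            \<partial>count_space UNIV \<partial>count_space UNIV)"
      by (rule nn_swap)
    also have "\<dots> = (\<integral>\<^sup>+n'. ?U * val q v n' * ennreal (q ^ m / qn q m * cc q m n') \<partial>count_space UNIV)"
      by (intro nn_integral_cong) (simp add: nn_integral_cmult cc_tele[OF q m])
    also have "\<dots> = (\<integral>\<^sup>+n. val q (LA # u) m * ennreal (cc q m n) * val q v n \<partial>count_space UNIV)"
    proof -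
      have EQ: "ennreal (cc q m n' * (q ^ m / qn q m)) = ennreal (cc q m n') * ennreal (q ^ m / qn q m)" for n'
        using cc_nonneg[OF q] qn_nonneg[OF q] q by (intro ennreal_mult'') auto
      show ?thesis by (intro nn_integral_cong) (simp only: EQ val.simps mult_ac)
    qed
    finally show ?thesis by simp
  qed
qed

lemma transB:
  assumes q: "0 < q" "q < 1" and v0: "val q v 0 = 0"
  shows "Z q (LB # u) v = Z q u (LA # v)"
  using transA[OF q v0, of u] Z_sym by metis

lemma trans_word:
  assumes q: "0 < q" "q < 1" and "u \<noteq> []" "v \<noteq> []"
  shows "Z q (w @ u) v = Z q u (rev (map sw w) @ v)"
  using assms(4)
proof (induction w arbitrary: v)
  case Nil then show ?case by simp
next
  case (Cons x w)
  show ?case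
  proof (cases x)
    case LA
    have "Z q ((x # w) @ u) v = Z q (w @ u) (LB # v)"
      using transA[OF q val_0, of "w @ u" v] assms(3) LA by simp
    also have "\<dots> = Z q u (rev (map sw w) @ LB # v)" using Cons.IH by simp
    finally show ?thesis using LA by simp
  next
    case LB
    have "Z q ((x # w) @ u) v = Z q (w @ u) (LA # v)"
      using transB[OF q val_0, of v "w @ u"] Cons.prems LB by simp
    also have "\<dots> = Z q u (rev (map sw w) @ LA # v)" using Cons.IH by simp
    finally show ?thesis using LB by simp
  qed
qed

lemma word_duality:
  assumes q: "0 < q" "q < 1"
  shows "zw q (LA # w @ [LB]) = zw q (rev (map sw (LA # w @ [LB])))"
proof -
  have "zw q (LA # w @ [LB]) = Z q (LA # (w @ [LB])) []" using Z_nil_right[OF q] by simp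
  also have "\<dots> = Z q (w @ [LB]) [LB]" using transA[OF q val_0] by simp
  also have "\<dots> = Z q [LB] (rev (map sw w) @ [LB])" using trans_word[OF q] by simp
  also have "\<dots> = Z q [] (LA # rev (map sw w) @ [LB])" using transB[OF q val_0] by simp
  also have "\<dots> = zw q (LA # rev (map sw w) @ [LB])" using Z_nil_left[OF q] by simp
  finally show ?thesis by simp
qed



lemma infsum_nn_conv:
  fixes f :: "'a \<Rightarrow> real"
  assumes nn: "\<And>x. x \<in> A \<Longrightarrow> f x \<ge> 0"
  shows "infsum f A = enn2real (\<integral>\<^sup>+x. ennreal (f x) \<partial>count_space A)"
proof (cases "f summable_on A")
  case True
  then have "Infinite_Sum.abs_summable_on f A"
  proof -
    have "(\<lambda>x. norm (f x)) summable_on A \<longleftrightarrow> f summable_on A"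
      using nn by (intro summable_on_cong) auto
    then show ?thesis using True by simp
  qed
  then have "Infinite_Set_Sum.abs_summable_on f A" using abs_summable_equivalent by blast
  then have "(\<integral>\<^sup>+x. ennreal (f x) \<partial>count_space A) = ennreal (infsetsum f A)"
    using nn by (intro nn_integral_conv_infsetsum) auto
  moreover have "infsetsum f A = infsum f A" using \<open>Infinite_Set_Sum.abs_summable_on f A\<close> by (rule infsetsum_infsum)
  moreover have "infsum f A \<ge> 0" using nn by (intro infsum_nonneg) auto
  ultimately show ?thesis by simp
next
  case False
  have "(\<integral>\<^sup>+x. ennreal (f x) \<partial>count_space A) = \<infinity>"
  proof (rule ccontr)
    assume fin: "(\<integral>\<^sup>+x. ennreal (f x) \<partial>count_space A) \<noteq> \<infinity>"
    have "integrable (count_space A) f"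
    proof (rule integrableI_bounded)
      show "f \<in> borel_measurable (count_space A)" by simp
      have "(\<integral>\<^sup>+x. ennreal (norm (f x)) \<partial>count_space A) = (\<integral>\<^sup>+x. ennreal (f x) \<partial>count_space A)"
        using nn by (intro nn_integral_cong) auto
      then show "(\<integral>\<^sup>+x. ennreal (norm (f x)) \<partial>count_space A) < \<infinity>"
        using fin by (simp add: less_top)
    qed
    then have "Infinite_Set_Sum.abs_summable_on f A" by (simp add: abs_summable_on_def)
    then have "Infinite_Sum.abs_summable_on f A" using abs_summable_equivalent by blast
    then have "f summable_on A" by (rule abs_summable_summable)
    then show False using False by simp
  qed
  then show ?thesis using False by (simp add: infsum_not_exists)
qed



definition Ib :: "nat \<Rightarrow> nat \<Rightarrow> nat list set" where
  "Ib N m = {ks \<in> qmzv_index N. \<forall>x\<in>set ks. x < m}"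

lemma nn_cons:
  fixes F :: "nat list \<Rightarrow> ennreal"
  shows "(\<integral>\<^sup>+x. F (k # x) * indicator A x \<partial>count_space UNIV)
       = (\<integral>\<^sup>+x. F x * indicator (Cons k ` A) x \<partial>count_space UNIV)"
proof -
  have "(\<integral>\<^sup>+x. F (k # x) * indicator A x \<partial>count_space UNIV) = (\<integral>\<^sup>+x. F (k # x) \<partial>count_space A)"
    by (rule nn_integral_count_space_indicator[symmetric]) simp
  also have "\<dots> = (\<integral>\<^sup>+x. F x \<partial>count_space (Cons k ` A))"
    by (rule nn_integral_bij_count_space) (simp add: bij_betw_def inj_on_def)
  also have "\<dots> = (\<integral>\<^sup>+x. F x * indicator (Cons k ` A) x \<partial>count_space UNIV)"
    by (rule nn_integral_count_space_indicator) simp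
  finally show ?thesis .
qed

lemma index_Suc_iff:
  "(P k \<and> 0 < k \<and> ks \<in> Cons k ` Ib N k) \<longleftrightarrow>
   (ks \<in> qmzv_index (Suc N) \<and> P (hd ks) \<and> k = hd ks)"
  by (cases ks) (auto simp: Ib_def qmzv_index_def)

lemma decomp:
  fixes g :: "nat list \<Rightarrow> ennreal"
  shows "(\<integral>\<^sup>+ks. g ks * indicator {ks \<in> qmzv_index (Suc N). P (hd ks)} ks \<partial>count_space UNIV)
       = (\<integral>\<^sup>+k. indicator {k. P k \<and> 0 < k} k *
            (\<integral>\<^sup>+ks'. g (k # ks') * indicator (Ib N k) ks' \<partial>count_space UNIV) \<partial>count_space UNIV)"
proof -
  have "(\<integral>\<^sup>+k. indicator {k. P k \<and> 0 < k} k *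
            (\<integral>\<^sup>+ks'. g (k # ks') * indicator (Ib N k) ks' \<partial>count_space UNIV) \<partial>count_space UNIV)
      = (\<integral>\<^sup>+k. \<integral>\<^sup>+ks. indicator {k. P k \<and> 0 < k} k * g ks * indicator (Cons k ` Ib N k) ks
            \<partial>count_space UNIV \<partial>count_space UNIV)"
  proof (rule nn_integral_cong)
    fix k :: nat
    have "(\<integral>\<^sup>+ks'. g (k # ks') * indicator (Ib N k) ks' \<partial>count_space UNIV)
        = (\<integral>\<^sup>+ks. g ks * indicator (Cons k ` Ib N k) ks \<partial>count_space UNIV)"
      by (rule nn_cons)
    then show "indicator {k. P k \<and> 0 < k} k *
            (\<integral>\<^sup>+ks'. g (k # ks') * indicator (Ib N k) ks' \<partial>count_space UNIV)
        = (\<integral>\<^sup>+ks. indicator {k. P k \<and> 0 < k} k * g ks * indicator (Cons k ` Ib N k) ks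
            \<partial>count_space UNIV)"
      by (simp add: nn_integral_cmult[symmetric] mult_ac)
  qed
  also have "\<dots> = (\<integral>\<^sup>+ks. \<integral>\<^sup>+k. indicator {k. P k \<and> 0 < k} k * g ks * indicator (Cons k ` Ib N k) ks
            \<partial>count_space UNIV \<partial>count_space UNIV)"
    by (rule nn_swap)
  also have "\<dots> = (\<integral>\<^sup>+ks. g ks * indicator {ks \<in> qmzv_index (Suc N). P (hd ks)} ks \<partial>count_space UNIV)"
  proof (rule nn_integral_cong)
    fix ks :: "nat list"
    have "indicator {k. P k \<and> 0 < k} k * g ks * indicator (Cons k ` Ib N k) ks
        = (g ks * indicator {ks \<in> qmzv_index (Suc N). P (hd ks)} ks) * indicator {hd ks} k" for k
      using index_Suc_iff[of P k ks N] by (auto simp: indicator_def)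
    then show "(\<integral>\<^sup>+k. indicator {k. P k \<and> 0 < k} k * g ks * indicator (Cons k ` Ib N k) ks
            \<partial>count_space UNIV) = g ks * indicator {ks \<in> qmzv_index (Suc N). P (hd ks)} ks"
      by (simp add: nn_point)
  qed
  finally show ?thesis by simp
qed



definition tm :: "real \<Rightarrow> nat list \<Rightarrow> nat list \<Rightarrow> real" where
  "tm q s = (\<lambda>ks. \<Prod>j<length s. q ^ ((s!j - 1) * ks!j) / (qint q (real (ks!j))) ^ (s!j))"

definition wd :: "nat list \<Rightarrow> letter list" where
  "wd s = concat (map (\<lambda>x. replicate (x - 1) LA @ [LB]) s)"

definition Sb :: "real \<Rightarrow> nat list \<Rightarrow> nat \<Rightarrow> ennreal" where
  "Sb q s m = (\<integral>\<^sup>+ks. ennreal (tm q s ks) * indicator (Ib (length s) m) ks \<partial>count_space UNIV)"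

lemma qint_qn: "0 < q \<Longrightarrow> qint q (real k) = qn q k"
  by (simp add: qint_def qn_def powr_realpow)

lemma tm_nonneg: "0 < q \<Longrightarrow> q < 1 \<Longrightarrow> tm q s ks \<ge> 0"
  unfolding tm_def using qn_nonneg[of q]
  by (intro prod_nonneg) (auto simp: qint_qn intro!: divide_nonneg_nonneg)

lemma tm_Nil[simp]: "tm q [] ks = 1" by (simp add: tm_def)

lemma tm_Cons: "tm q (x # s) (k # ks) = q ^ ((x - 1) * k) / (qint q (real k)) ^ x * tm q s ks"
  unfolding tm_def length_Cons prod.lessThan_Suc_shift by (simp del: prod.lessThan_Suc)

lemma wd_Cons: "wd (x # s) = replicate (x - 1) LA @ LB # wd s"
  by (simp add: wd_def)

lemma wd_ne: "wd (x # s) \<noteq> []" by (simp add: wd_Cons)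

lemma val_rep: "val q (replicate j LA @ w) k = ennreal (q ^ k / qn q k) ^ j * val q w k"
  by (induction j) (simp_all add: mult_ac)

lemma wt_split:
  assumes q: "0 < q" "q < 1" and x: "x \<ge> 1" and k: "k \<ge> 1"
  shows "ennreal (q ^ ((x - 1) * k) / (qint q (real k)) ^ x)
       = ennreal (q ^ k / qn q k) ^ (x - 1) * ennreal (1 / qn q k)"
proof -
  obtain y where y: "x = Suc y" using x by (cases x) auto
  have p: "qn q k > 0" using qn_pos[OF q k] .
  have e: "q ^ ((x - 1) * k) / (qint q (real k)) ^ x = (q ^ k / qn q k) ^ y * (1 / qn q k)"
    using p q by (simp add: y qint_qn power_divide power_mult[symmetric] mult.commute)
  have "ennreal (q ^ ((x - 1) * k) / (qint q (real k)) ^ x) = ennreal ((q ^ k / qn q k) ^ y * (1 / qn q k))"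
    using e by (rule arg_cong)
  also have "\<dots> = ennreal ((q ^ k / qn q k) ^ y) * ennreal (1 / qn q k)"
    using p q by (intro ennreal_mult'') auto
  also have "ennreal ((q ^ k / qn q k) ^ y) = ennreal (q ^ k / qn q k) ^ y"
    using p q by (intro ennreal_power[symmetric]) auto
  finally show ?thesis using y by simp
qed

lemma Ib_Suc: "Ib (Suc N) m = {ks \<in> qmzv_index (Suc N). hd ks < m}"
  apply (auto simp: Ib_def qmzv_index_def length_Suc_conv)
  using order.strict_trans by blast

lemma step:
  assumes q: "0 < q" "q < 1" and x: "x \<ge> 1"
    and IH: "\<And>m. m \<ge> 1 \<Longrightarrow> Sb q s m = (\<Sum>m'<m. val q (wd s) m')"
  shows "(\<integral>\<^sup>+ks. ennreal (tm q (x # s) ks) * indicator {ks \<in> qmzv_index (Suc (length s)). P (hd ks)} ks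
            \<partial>count_space UNIV)
       = (\<integral>\<^sup>+k. val q (wd (x # s)) k * indicator {k. P k} k \<partial>count_space UNIV)"
proof -
  have "(\<integral>\<^sup>+ks. ennreal (tm q (x # s) ks) * indicator {ks \<in> qmzv_index (Suc (length s)). P (hd ks)} ks
            \<partial>count_space UNIV)
     = (\<integral>\<^sup>+k. indicator {k. P k \<and> 0 < k} k *
            (\<integral>\<^sup>+ks'. ennreal (tm q (x # s) (k # ks')) * indicator (Ib (length s) k) ks' \<partial>count_space UNIV)
            \<partial>count_space UNIV)"
    by (rule decomp)
  also have "\<dots> = (\<integral>\<^sup>+k. val q (wd (x # s)) k * indicator {k. P k} k \<partial>count_space UNIV)"
  proof (rule nn_integral_cong)
    fix k :: nat
    show "indicator {k. P k \<and> 0 < k} k *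
            (\<integral>\<^sup>+ks'. ennreal (tm q (x # s) (k # ks')) * indicator (Ib (length s) k) ks' \<partial>count_space UNIV)
        = val q (wd (x # s)) k * indicator {k. P k} k"
    proof (cases "P k \<and> 0 < k")
      case False
      then show ?thesis using val_0[OF wd_ne, of q x s] by (auto simp: indicator_def)
    next
      case True
      then have k: "k \<ge> 1" by simp
      let ?w = "ennreal (q ^ ((x - 1) * k) / (qint q (real k)) ^ x)"
      have "(\<integral>\<^sup>+ks'. ennreal (tm q (x # s) (k # ks')) * indicator (Ib (length s) k) ks' \<partial>count_space UNIV)
          = (\<integral>\<^sup>+ks'. ?w * (ennreal (tm q s ks') * indicator (Ib (length s) k) ks') \<partial>count_space UNIV)"
      proof (rule nn_integral_cong)
        fix ks'
        have "ennreal (tm q (x # s) (k # ks')) = ?w * ennreal (tm q s ks')"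
          unfolding tm_Cons using tm_nonneg[OF q] q qn_nonneg[OF q]
          by (intro ennreal_mult'') (auto simp: qint_qn)
        then show "ennreal (tm q (x # s) (k # ks')) * indicator (Ib (length s) k) ks'
            = ?w * (ennreal (tm q s ks') * indicator (Ib (length s) k) ks')"
          by (simp add: mult_ac)
      qed
      also have "\<dots> = ?w * Sb q s k"
        unfolding Sb_def by (rule nn_integral_cmult) simp
      also have "\<dots> = ?w * (\<Sum>m'<k. val q (wd s) m')" using IH[OF k] by simp
      also have "\<dots> = val q (wd (x # s)) k"
        unfolding wt_split[OF q x k] by (simp add: wd_Cons val_rep mult_ac)
      finally show ?thesis using True by (simp add: indicator_def)
    qed
  qed
  finally show ?thesis .
qed

lemma C1:
  assumes q: "0 < q" "q < 1"
  shows "(\<forall>x\<in>set s. x \<ge> 1) \<Longrightarrow> m \<ge> 1 \<Longrightarrow> Sb q s m = (\<Sum>m'<m. val q (wd s) m')"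
proof (induction s arbitrary: m)
  case Nil
  have "Ib 0 m = {[]}" by (auto simp: Ib_def qmzv_index_def)
  then have "Sb q [] m = 1" by (simp add: Sb_def nn_point[of 1, simplified])
  moreover have "(\<Sum>m'<m. val q (wd []) m') = 1"
    using Nil.prems by (simp add: wd_def sum.delta' lessThan_def)
  ultimately show ?case by simp
next
  case (Cons x s)
  have x: "x \<ge> 1" using Cons.prems by simp
  have IH: "\<And>m. m \<ge> 1 \<Longrightarrow> Sb q s m = (\<Sum>m'<m. val q (wd s) m')"
    using Cons.IH Cons.prems by simp
  have "Sb q (x # s) m = (\<integral>\<^sup>+ks. ennreal (tm q (x # s) ks) *
          indicator {ks \<in> qmzv_index (Suc (length s)). hd ks < m} ks \<partial>count_space UNIV)"
    by (simp add: Sb_def Ib_Suc)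
  also have "\<dots> = (\<integral>\<^sup>+k. val q (wd (x # s)) k * indicator {k. k < m} k \<partial>count_space UNIV)"
    by (rule step[OF q x IH])
  also have "\<dots> = (\<Sum>m'<m. val q (wd (x # s)) m')"
  proof -
    have "{k. k < m} = {..<m}" by auto
    then show ?thesis by (simp only: nn_finsum)
  qed
  finally show ?case .
qed

lemma C2:
  assumes q: "0 < q" "q < 1" and s: "\<forall>x\<in>set s. x \<ge> 1" "s \<noteq> []"
  shows "(\<integral>\<^sup>+ks. ennreal (tm q s ks) * indicator (qmzv_index (length s)) ks \<partial>count_space UNIV)
       = zw q (wd s)"
proof -
  obtain x s' where xs: "s = x # s'" using s(2) by (cases s) auto
  have x: "x \<ge> 1" using s xs by simp
  have IH: "\<And>m. m \<ge> 1 \<Longrightarrow> Sb q s' m = (\<Sum>m'<m. val q (wd s') m')"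
    using C1[OF q] s xs by simp
  have "(\<integral>\<^sup>+ks. ennreal (tm q s ks) * indicator (qmzv_index (length s)) ks \<partial>count_space UNIV)
      = (\<integral>\<^sup>+ks. ennreal (tm q (x # s') ks) *
          indicator {ks \<in> qmzv_index (Suc (length s')). True} ks \<partial>count_space UNIV)"
    by (simp add: xs)
  also have "\<dots> = (\<integral>\<^sup>+k. val q (wd (x # s')) k * indicator {k. True} k \<partial>count_space UNIV)"
    by (rule step[OF q x IH])
  also have "\<dots> = zw q (wd s)" by (simp add: zw_def xs)
  finally show ?thesis .
qed

lemma qmzv_conv:
  assumes q: "0 < q" "q < 1" and s: "\<forall>x\<in>set s. x \<ge> 1" "s \<noteq> []"
  shows "qmzv q s = enn2real (zw q (wd s))"
proof -
  have "qmzv q s = infsum (tm q s) (qmzv_index (length s))"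
    by (simp add: qmzv_def tm_def)
  also have "\<dots> = enn2real (\<integral>\<^sup>+ks. ennreal (tm q s ks) \<partial>count_space (qmzv_index (length s)))"
    using tm_nonneg[OF q] by (intro infsum_nn_conv) auto
  also have "(\<integral>\<^sup>+ks. ennreal (tm q s ks) \<partial>count_space (qmzv_index (length s)))
      = (\<integral>\<^sup>+ks. ennreal (tm q s ks) * indicator (qmzv_index (length s)) ks \<partial>count_space UNIV)"
    by (rule nn_integral_count_space_indicator) simp
  also have "\<dots> = zw q (wd s)" by (rule C2[OF q s])
  finally show ?thesis .
qed



definition blk :: "nat \<Rightarrow> nat \<Rightarrow> letter list" where
  "blk x y = replicate (Suc x) LA @ LB # replicate y LB"

lemma wd_Nil[simp]: "wd [] = []" by (simp add: wd_def)

lemma wd_append[simp]: "wd (xs @ ys) = wd xs @ wd ys" by (simp add: wd_def)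

lemma wd_concat: "wd (concat L) = concat (map wd L)"
  by (induction L) (simp_all add: wd_def)

lemma wd_rep1: "wd (replicate b (Suc 0)) = replicate b LB"
  by (induction b) (simp_all add: wd_Cons)

lemma wd_block: "wd (Suc (Suc x) # replicate y (Suc 0)) = blk x y"
  by (simp add: wd_Cons wd_rep1 blk_def)

lemma rev_sw_blk: "rev (map sw (blk x y)) = blk y x"
  by (simp add: blk_def replicate_append_same[symmetric] del: replicate_append_same)

lemma rev_sw_concat: "rev (map sw (concat (map f js))) = concat (map (\<lambda>j. rev (map sw (f j))) (rev js))"
  by (induction js) simp_all

lemma blk_ne[simp]: "blk x y \<noteq> []" by (simp add: blk_def)

lemma last_blk: "last (blk x y) = LB"
  by (cases y) (simp_all add: blk_def last_append)

theorem corollary3p2: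
  fixes q :: real and n :: nat and a b :: "nat \<Rightarrow> nat"
  assumes "0 < q" "q < 1" "n \<ge> 1"
  shows "qmzv q (concat (map (\<lambda>j. (a j + 2) # replicate (b j) 1) [1..<n+1]))
       = qmzv q (concat (map (\<lambda>j. (b j + 2) # replicate (a j) 1) (rev [1..<n+1])))"
proof -
  have q: "0 < q" "q < 1" using assms by auto
  define js where "js = [1..<n+1]"
  define sL where "sL = concat (map (\<lambda>j. (a j + 2) # replicate (b j) 1) js)"
  define sR where "sR = concat (map (\<lambda>j. (b j + 2) # replicate (a j) 1) (rev js))"
  obtain t where js1: "js = 1 # t"
    using upt_conv_Cons[of 1 "n+1"] assms(3) unfolding js_def by auto
  have js2: "js = [1..<n] @ [n]" using assms(3) by (simp add: js_def)
  have sL1: "\<forall>x\<in>set sL. x \<ge> 1" "sL \<noteq> []" by (auto simp: sL_def js1)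
  have sR1: "\<forall>x\<in>set sR. x \<ge> 1" "sR \<noteq> []" by (auto simp: sR_def js1)
  have wL: "wd sL = concat (map (\<lambda>j. blk (a j) (b j)) js)"
    by (simp add: sL_def wd_concat wd_block o_def)
  have wR: "wd sR = concat (map (\<lambda>j. blk (b j) (a j)) (rev js))"
    by (simp add: sR_def wd_concat wd_block o_def)
  have rv: "rev (map sw (wd sL)) = wd sR"
    unfolding wL wR rev_sw_concat rev_sw_blk ..
  define W where "W = wd sL"
  have W1: "W = LA # tl W" "tl W \<noteq> []"
    by (simp_all add: W_def wL js1 blk_def)
  have "last W = LB"
    by (simp add: W_def wL js2 last_blk last_append)
  then have "last (tl W) = LB" using W1 by (metis last_ConsR)
  then have W2: "W = LA # butlast (tl W) @ [LB]"
    using W1 by (metis append_butlast_last_id)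
  have "qmzv q sL = enn2real (zw q (wd sL))" by (rule qmzv_conv[OF q sL1])
  also have "zw q (wd sL) = zw q (rev (map sw (wd sL)))"
    using word_duality[OF q, of "butlast (tl W)"] W2 unfolding W_def by metis
  also have "\<dots> = zw q (wd sR)" by (simp add: rv)
  also have "enn2real (zw q (wd sR)) = qmzv q sR" by (rule qmzv_conv[OF q sR1, symmetric])
  finally show ?thesis by (simp add: sL_def sR_def js_def)
qed

end
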